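(* Let $p\ge0$, $(\kappa_i)$ with $C^{-1}i^{-p}\le\kappa_i\le Ci^{-p}$, $\mu_0\in\ell_2$, and constants $0<l<L$. Define \[ h_n(\alpha)=\frac{1+2\alpha+2p}{n^{1/(1+2\alpha+2p)}\log n}\sum_{i=1}^{\infty}\frac{n^2 i^{1+2\alpha}\mu_{0,i}^2\log i}{(i^{1+2\alpha}\kappa_i^{-2}+n)^2}, \] $\underline{\alpha}_n=\inf\{\alpha>0:h_n(\alpha)>l\}\wedge\sqrt{\log n}$ and $\overline{\alpha}_n=\inf\{\alpha>0:h_n(\alpha)>L(\log n)^2\}$. Then, with constants not depending on $n$, $\alpha$ or $\mu_0$, \[ h_n(\alpha)\gtrsim h_n(\overline{\alpha}_n)\quad\text{for }\alpha\in\Big[\overline{\alpha}_n-\frac1{\log n},\overline{\alpha}_n\Big]\text{ and }n\ge e^4, \] \[ h_n(\alpha)\lesssim h_n(\underline{\alpha}_n)\quad\text{for }\alpha\in\Big[\underline{\alpha}_n,\underline{\alpha}_n+\frac1{\log n}\Big]\text{ and }n\ge e^2. \]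
   Context: $a\lesssim b$ means $a\le Kb$ for a constant $K>0$; $a\gtrsim b$ means $b\lesssim a$. Infimum of the empty set is $+\infty$. *)

theory Defs
  imports "HOL-Analysis.Analysis"
begin

text \<open>Sequences are indexed from 1; the value at index 0 is ignored.
  h_n(alpha) for the parameter p, the sequence kappa, the sequence mu0 and sample size n.\<close>
definition hfun :: "real \<Rightarrow> (nat \<Rightarrow> real) \<Rightarrow> (nat \<Rightarrow> real) \<Rightarrow> nat \<Rightarrow> real \<Rightarrow> real" where
  "hfun p \<kappa> \<mu> n \<alpha> =
     (1 + 2*\<alpha> + 2*p) / (real n powr (1 / (1 + 2*\<alpha> + 2*p)) * ln (real n)) *
     (\<Sum>j. let i = Suc j in
        (real n)^2 * real i powr (1 + 2*\<alpha>) * (\<mu> i)^2 * ln (real i)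
        / (real i powr (1 + 2*\<alpha>) / (\<kappa> i)^2 + real n)^2)"

text \<open>Upper threshold: inf{alpha>0 : h_n(alpha) > L (log n)^2}, infimum of empty set = +infinity.\<close>
definition alpha_up :: "real \<Rightarrow> (nat \<Rightarrow> real) \<Rightarrow> (nat \<Rightarrow> real) \<Rightarrow> real \<Rightarrow> nat \<Rightarrow> ereal" where
  "alpha_up p \<kappa> \<mu> L n =
     Inf {ereal \<alpha> | \<alpha>. \<alpha> > 0 \<and> hfun p \<kappa> \<mu> n \<alpha> > L * (ln (real n))^2}"

definition alpha_low :: "real \<Rightarrow> (nat \<Rightarrow> real) \<Rightarrow> (nat \<Rightarrow> real) \<Rightarrow> real \<Rightarrow> nat \<Rightarrow> ereal" where
  "alpha_low p \<kappa> \<mu> l n =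
     min (Inf {ereal \<alpha> | \<alpha>. \<alpha> > 0 \<and> hfun p \<kappa> \<mu> n \<alpha> > l})
         (ereal (sqrt (ln (real n))))"

end

theory Submission
  imports Defs
begin

definition tm :: "(nat \<Rightarrow> real) \<Rightarrow> (nat \<Rightarrow> real) \<Rightarrow> nat \<Rightarrow> real \<Rightarrow> nat \<Rightarrow> real" where
  "tm \<kappa> \<mu> n a j = (real n)^2 * real (Suc j) powr (1+2*a) * (\<mu> (Suc j))^2 * ln (real (Suc j))
     / (real (Suc j) powr (1+2*a) / (\<kappa> (Suc j))^2 + real n)^2"

lemma hfun_tm: "hfun p \<kappa> \<mu> n a = (1+2*a+2*p)/(real n powr (1/(1+2*a+2*p)) * ln (real n)) * (\<Sum>j. tm \<kappa> \<mu> n a j)"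
  by (simp add: hfun_def tm_def Let_def)

lemma ratio_core:
  fixes x A N t T :: real
  assumes "x>0" "A>0" "N>0" "t\<ge>1" "x*A<N \<Longrightarrow> t\<le>T" "T\<ge>4"
  shows "t*x/(t*x*A+N)^2 \<le> T*(x/(x*A+N)^2)"
proof -
  have "t*x*A > 0" "x*A>0" using assms by auto
  hence "t*x*A+N > 0" "x*A+N>0" using assms by linarith+
  hence d1: "(t*x*A+N)^2 > 0" "(x*A+N)^2 > 0" by simp_all
  have "t*x*(x*A+N)^2 \<le> T*x*(t*x*A+N)^2"
  proof (cases "x*A < N")
    case True
    have "x*A+N \<le> t*x*A+N" using assms by (simp add: mult_right_mono mult_left_mono)
    hence "(x*A+N)^2 \<le> (t*x*A+N)^2" using assms by (intro power_mono) (auto intro: add_nonneg_nonneg)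
    hence "t*x*(x*A+N)^2 \<le> t*x*(t*x*A+N)^2" using assms by simp
    also have "\<dots> \<le> T*x*(t*x*A+N)^2" using assms True by (intro mult_right_mono) auto
    finally show ?thesis .
  next
    case False
    have NA: "N \<le> x*A" using False by simp
    have "(x*A+N)^2 \<le> (2*(x*A))^2" using NA assms by (intro power_mono) (auto simp: mult.commute)
    hence "t*x*(x*A+N)^2 \<le> t*x*(2*(x*A))^2" using assms by simp
    also have "\<dots> = 4*x*(t*(x*A)^2)" by (simp add: power2_eq_square)
    also have "\<dots> \<le> 4*x*((t*x*A)^2)"
    proof -
      have "t*(x*A)^2 \<le> t*t*(x*A)^2" using assms by (intro mult_right_mono) auto
      thus ?thesis using assms by (simp add: power2_eq_square mult_ac)
    qed
    also have "\<dots> \<le> T*x*((t*x*A+N)^2)"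
    proof (intro mult_mono)
      show "(t*x*A)^2 \<le> (t*x*A+N)^2" using assms by (intro power_mono) auto
    qed (use assms in auto)
    finally show ?thesis .
  qed
  thus ?thesis using d1 by (simp add: divide_simps mult_ac)
qed

lemma kap_facts:
  fixes p C :: real and \<kappa> :: "nat \<Rightarrow> real"
  assumes "p \<ge> 0" and "C > 0"
    and "\<And>i. i \<ge> 1 \<Longrightarrow> inverse C * real i powr (-p) \<le> \<kappa> i \<and> \<kappa> i \<le> C * real i powr (-p)"
    and "i \<ge> 1"
  shows "0 < \<kappa> i" "\<kappa> i \<le> C"
proof -
  have ip: "real i powr p \<ge> 1" using assms by (intro ge_one_powr_ge_zero) auto
  have i0: "real i powr (-p) > 0" using assms by simp
  have i1: "real i powr (-p) \<le> 1" using ip le_imp_inverse_le[of 1 "real i powr p"] by (simp add: powr_minus)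
  show "0 < \<kappa> i" using assms(3)[OF assms(4)] i0 assms(2)
    by (smt (verit) mult_pos_pos positive_imp_inverse_positive)
  have "C * real i powr (-p) \<le> C" using i1 assms(2) by (simp add: mult_left_le)
  thus "\<kappa> i \<le> C" using assms(3)[OF assms(4)] by linarith
qed

lemma tm_nonneg: "tm \<kappa> \<mu> n a j \<ge> 0"
  unfolding tm_def by (intro divide_nonneg_nonneg mult_nonneg_nonneg) auto

lemma tm_bound:
  assumes a: "a \<ge> -1/4" and k0: "\<kappa> (Suc j) > 0" and kC: "\<kappa> (Suc j) \<le> C"
  shows "tm \<kappa> \<mu> n a j \<le> 2 * C^4 * (real n)^2 * (\<mu> (Suc j))^2"
proof -
  define i where "i = real (Suc j)"
  define x where "x = i powr (1+2*a)"
  define k where "k = (\<kappa> (Suc j))^2"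
  define L where "L = ln i"
  have i1: "i \<ge> 1" unfolding i_def by simp
  have x0: "x > 0" unfolding x_def using i1 by simp
  have k0': "k > 0" unfolding k_def using k0 by simp
  have kk: "k^2 \<le> C^4"
  proof -
    have "k \<le> C^2" unfolding k_def using k0 kC by (intro power_mono) auto
    hence "k^2 \<le> (C^2)^2" using k0' by (intro power_mono) auto
    thus ?thesis by simp
  qed
  have L0: "L \<ge> 0" unfolding L_def using i1 by simp
  have Lx: "L \<le> 2 * x"
  proof -
    have "L \<le> i powr (1/2) / (1/2)" unfolding L_def using i1 by (intro ln_powr_bound) auto
    also have "\<dots> = 2 * i powr (1/2)" by simp
    also have "\<dots> \<le> 2 * x" unfolding x_def using i1 a by (intro mult_left_mono powr_mono) auto
    finally show ?thesis .
  qed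
  have tmeq: "tm \<kappa> \<mu> n a j = (real n)^2 * (\<mu> (Suc j))^2 * (x * L / (x/k + real n)^2)"
    unfolding tm_def x_def k_def L_def i_def by (simp add: mult_ac)
  have "x * L / (x/k + real n)^2 \<le> x * L / (x/k)^2"
  proof (rule divide_left_mono)
    show "(x/k)^2 \<le> (x/k + real n)^2" using x0 k0' by (intro power_mono) auto
    show "0 \<le> x*L" using x0 L0 by simp
    have "x/k > 0" using x0 k0' by simp
    hence "x/k + real n > 0" by (simp add: add_pos_nonneg)
    hence "(x/k + real n)^2 > 0" by (rule zero_less_power)
    moreover have "(x/k)^2 > 0" using \<open>x/k>0\<close> by (rule zero_less_power)
    ultimately show "0 < (x/k + real n)^2 * (x/k)^2" by (rule mult_pos_pos)
  qed
  also have "\<dots> = k^2 * (L / x)" using x0 k0' by (simp add: power2_eq_square field_simps)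
  also have "\<dots> \<le> C^4 * 2"
  proof (rule mult_mono)
    show "L / x \<le> 2" using Lx x0 by (simp add: divide_simps)
  qed (use kk L0 x0 in auto)
  finally have "x * L / (x/k + real n)^2 \<le> 2 * C^4" by simp
  hence "(real n)^2 * (\<mu> (Suc j))^2 * (x * L / (x/k + real n)^2) \<le> (real n)^2 * (\<mu> (Suc j))^2 * (2 * C^4)"
    by (intro mult_left_mono) auto
  thus ?thesis unfolding tmeq by (simp add: mult_ac)
qed

lemma tm_summable:
  assumes a: "a \<ge> -1/4" and kf: "\<And>j. \<kappa> (Suc j) > 0 \<and> \<kappa> (Suc j) \<le> C"
    and sm: "summable (\<lambda>j. (\<mu> (Suc j))^2)"
  shows "summable (tm \<kappa> \<mu> n a)"
proof (rule summable_comparison_test)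
  show "summable (\<lambda>j. 2 * C^4 * (real n)^2 * (\<mu> (Suc j))^2)" using sm by (intro summable_mult)
  show "\<exists>N. \<forall>j\<ge>N. norm (tm \<kappa> \<mu> n a j) \<le> 2 * C^4 * (real n)^2 * (\<mu> (Suc j))^2"
    using tm_bound[OF a] kf tm_nonneg by (metis real_norm_def abs_of_nonneg)
qed

lemma tm_ratio:
  assumes ln2: "ln (real n) \<ge> 2" and g: "\<gamma> \<ge> -1/4" and gb: "\<gamma> \<le> \<beta>" and bg: "\<beta> \<le> \<gamma> + 1/ln(real n)"
   and k0: "\<kappa> (Suc j) > 0" and kC: "\<kappa> (Suc j) \<le> C" and C: "C>0"
  shows "tm \<kappa> \<mu> n \<beta> j \<le> exp(4+4*\<bar>ln C\<bar>) * tm \<kappa> \<mu> n \<gamma> j"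
proof -
  define i where "i = real (Suc j)"
  define x where "x = i powr (1+2*\<gamma>)"
  define t where "t = i powr (2*(\<beta>-\<gamma>))"
  define A where "A = 1 / (\<kappa> (Suc j))^2"
  define L where "L = ln i"
  define T where "T = exp(4+4*\<bar>ln C\<bar>)"
  have n0: "real n > 0" using ln2 by (cases "n=0") auto
  have lnn: "ln (real n) > 0" using ln2 by simp
  have i1: "i \<ge> 1" unfolding i_def by simp
  have x0: "x > 0" unfolding x_def using i1 by simp
  have A0: "A > 0" unfolding A_def using k0 by simp
  have L0: "L \<ge> 0" unfolding L_def using i1 by simp
  have t1: "t \<ge> 1" unfolding t_def using i1 gb by (intro ge_one_powr_ge_zero) auto
  have T4: "T \<ge> 4"
  proof -
    have "exp (4::real) \<ge> 1 + 4" by (rule exp_ge_add_one_self)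
    also have "exp (4::real) \<le> T" unfolding T_def by simp
    finally show ?thesis by simp
  qed
  have xb: "i powr (1+2*\<beta>) = t*x"
  proof -
    have "i powr (1+2*\<beta>) = i powr (2*(\<beta>-\<gamma>) + (1+2*\<gamma>))" by (simp add: algebra_simps)
    also have "\<dots> = t*x" unfolding t_def x_def by (rule powr_add)
    finally show ?thesis .
  qed
  define c where "c = (real n)^2 * (\<mu> (Suc j))^2 * L"
  have c0: "c \<ge> 0" unfolding c_def using L0 by simp
  have tmb: "tm \<kappa> \<mu> n \<beta> j = c * (t*x/(t*x*A+real n)^2)"
    unfolding tm_def i_def[symmetric] xb by (simp add: A_def L_def c_def mult_ac)
  have tmg: "tm \<kappa> \<mu> n \<gamma> j = c * (x/(x*A+real n)^2)"
    unfolding tm_def i_def[symmetric] x_def[symmetric] by (simp add: A_def L_def c_def mult_ac)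
  have tT: "t \<le> T" if small: "x*A < real n"
  proof -
    have kk: "(\<kappa> (Suc j))^2 \<le> C^2" using k0 kC by (intro power_mono) auto
    have AC: "1/C^2 \<le> A" unfolding A_def using k0 kk C by (intro divide_left_mono) auto
    have "x/C^2 \<le> x*A" using AC x0 by (simp add: mult_left_mono divide_simps)
    hence "x/C^2 < real n" using small by linarith
    moreover have "C^2 > 0" using C by simp
    ultimately have "x < C^2 * real n" by (simp add: pos_divide_less_eq mult.commute)
    moreover have "i powr (1/2) \<le> x" unfolding x_def using i1 g by (intro powr_mono) auto
    ultimately have lt: "i powr (1/2) < C^2 * real n" by linarith
    have "L/2 = ln (i powr (1/2))" unfolding L_def by simp
    also have "\<dots> < ln (C^2 * real n)" using lt i1 C n0 by (intro ln_less_cancel_iff[THEN iffD2]) auto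
    also have "\<dots> = 2 * ln C + ln (real n)" using C n0 by (simp add: ln_mult ln_realpow)
    finally have Lb: "L \<le> 2 * (2 * ln C + ln (real n))" by simp
    have "t = exp (2*(\<beta>-\<gamma>) * L)" unfolding t_def L_def powr_def using i1 by simp
    also have "\<dots> \<le> T"
    proof -
      have "2*(\<beta>-\<gamma>) * L \<le> (2 * (1/ln (real n))) * L"
        using bg gb L0 by (intro mult_right_mono) auto
      also have "\<dots> \<le> (2 * (1/ln (real n))) * (2 * (2 * ln C + ln (real n)))"
        using Lb lnn by (intro mult_left_mono) auto
      also have "\<dots> = 4 + 8 * ln C / ln (real n)" using lnn by (simp add: field_simps)
      also have "\<dots> \<le> 4 + 4*\<bar>ln C\<bar>"
      proof -
        have "8 * ln C / ln (real n) \<le> 8 * \<bar>ln C\<bar> / ln (real n)" using lnn by (intro divide_right_mono) auto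
        also have "\<dots> \<le> 8 * \<bar>ln C\<bar> / 2" using lnn ln2 by (intro divide_left_mono) auto
        finally show ?thesis by simp
      qed
      finally show ?thesis unfolding T_def by simp
    qed
    finally show ?thesis .
  qed
  have "t*x/(t*x*A+real n)^2 \<le> T*(x/(x*A+real n)^2)"
    using x0 A0 n0 t1 tT T4 by (intro ratio_core) auto
  hence "c * (t*x/(t*x*A+real n)^2) \<le> c * (T*(x/(x*A+real n)^2))" using c0 by (rule mult_left_mono)
  thus ?thesis unfolding tmb tmg T_def by (simp add: mult_ac)
qed

lemma pref:
  assumes ln2: "ln (real n) \<ge> 2" and p: "p \<ge> 0" and g: "\<gamma> \<ge> -1/4" and gb: "\<gamma> \<le> \<beta>" and bg: "\<beta> \<le> \<gamma> + 1/ln(real n)"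
  shows "(1+2*\<beta>+2*p)/(real n powr (1/(1+2*\<beta>+2*p)) * ln (real n))
     \<le> 3*exp 8 * ((1+2*\<gamma>+2*p)/(real n powr (1/(1+2*\<gamma>+2*p)) * ln (real n)))"
proof -
  define qg where "qg = 1+2*\<gamma>+2*p"
  define qb where "qb = 1+2*\<beta>+2*p"
  define N where "N = real n"
  define Lg where "Lg = ln N"
  have n0: "N > 0" unfolding N_def using ln2 by (cases "n=0") auto
  have lnn: "Lg \<ge> 2" unfolding Lg_def N_def using ln2 by simp
  have qg2: "qg \<ge> 1/2" unfolding qg_def using g p by simp
  have qbg: "qb \<ge> qg" unfolding qb_def qg_def using gb by simp
  have diff: "qb - qg \<le> 2/Lg" unfolding qb_def qg_def Lg_def N_def using bg by simp
  have "2/Lg \<le> 1" using lnn by simp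
  hence qb3: "qb \<le> 3*qg" using diff qg2 by linarith
  define e where "e = 1/qg - 1/qb"
  have e_eq: "e = (qb - qg)/(qg*qb)" unfolding e_def using qg2 qbg by (simp add: field_simps)
  have "qg*qb \<ge> 1/4"
  proof -
    have "qg*qb \<ge> (1/2)*(1/2)" using qg2 qbg by (intro mult_mono) auto
    thus ?thesis by simp
  qed
  hence "e \<le> (qb - qg)/(1/4)" unfolding e_eq using qbg by (intro divide_left_mono) auto
  also have "\<dots> \<le> 8/Lg" using diff by simp
  finally have e8: "e * Lg \<le> 8" using lnn by (simp add: field_simps)
  define E where "E = N powr e"
  have E0: "E > 0" unfolding E_def using n0 by simp
  have E8: "E \<le> exp 8" unfolding E_def powr_def using n0 e8 by (simp add: Lg_def mult.commute)
  have Ng: "N powr (1/qg) = N powr (1/qb) * E" unfolding E_def e_def by (simp add: powr_add[symmetric])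
  define Nb where "Nb = N powr (1/qb)"
  have Nb0: "Nb > 0" unfolding Nb_def using n0 by simp
  have Lg0: "Lg > 0" using lnn by simp
  have "qb/(Nb*Lg) \<le> (3*qg)/(Nb*Lg)" using qb3 Nb0 Lg0 by (intro divide_right_mono) auto
  also have "\<dots> = (3*qg)/(Nb*Lg) * 1" by simp
  also have "\<dots> \<le> (3*qg)/(Nb*Lg) * (exp 8 / E)"
    using E8 E0 qg2 Nb0 Lg0 by (intro mult_left_mono) auto
  also have "\<dots> = 3*exp 8 * (qg/(Nb * E * Lg))" using E0 by (simp add: field_simps)
  finally show ?thesis unfolding qg_def[symmetric] qb_def[symmetric] N_def[symmetric] Lg_def[symmetric]
    Ng Nb_def by simp
qed

lemma key:
  fixes p C :: real and \<kappa> \<mu> :: "nat \<Rightarrow> real"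
  assumes p: "p \<ge> 0" and C: "C > 0"
    and kap: "\<And>i. i \<ge> 1 \<Longrightarrow> inverse C * real i powr (-p) \<le> \<kappa> i \<and> \<kappa> i \<le> C * real i powr (-p)"
    and sm: "summable (\<lambda>j. (\<mu> (Suc j))^2)"
    and ln2: "ln (real n) \<ge> 2" and g: "\<gamma> \<ge> -1/4" and gb: "\<gamma> \<le> \<beta>" and bg: "\<beta> \<le> \<gamma> + 1/ln(real n)"
  shows "hfun p \<kappa> \<mu> n \<beta> \<le> (3*exp 8 * exp(4+4*\<bar>ln C\<bar>)) * hfun p \<kappa> \<mu> n \<gamma>"
proof -
  define T where "T = exp(4+4*\<bar>ln C\<bar>)"
  have kf: "\<And>j. \<kappa> (Suc j) > 0 \<and> \<kappa> (Suc j) \<le> C" using kap_facts[OF p C kap] by simp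
  have b4: "\<beta> \<ge> -1/4" using g gb by simp
  have smb: "summable (tm \<kappa> \<mu> n \<beta>)" using b4 kf sm by (rule tm_summable)
  have smg: "summable (tm \<kappa> \<mu> n \<gamma>)" using g kf sm by (rule tm_summable)
  have "(\<Sum>j. tm \<kappa> \<mu> n \<beta> j) \<le> (\<Sum>j. T * tm \<kappa> \<mu> n \<gamma> j)"
    using smb smg tm_ratio[OF ln2 g gb bg] kf C unfolding T_def
    by (intro suminf_le summable_mult) auto
  also have "\<dots> = T * (\<Sum>j. tm \<kappa> \<mu> n \<gamma> j)" using smg by (rule suminf_mult)
  finally have Sle: "(\<Sum>j. tm \<kappa> \<mu> n \<beta> j) \<le> T * (\<Sum>j. tm \<kappa> \<mu> n \<gamma> j)" .
  have S0: "(\<Sum>j. tm \<kappa> \<mu> n \<beta> j) \<ge> 0" using smb tm_nonneg by (intro suminf_nonneg) auto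
  have n0: "real n > 0" using ln2 by (cases "n=0") auto
  have Pg0: "(1+2*\<gamma>+2*p)/(real n powr (1/(1+2*\<gamma>+2*p)) * ln (real n)) \<ge> 0"
  proof (rule divide_nonneg_pos)
    show "0 \<le> 1+2*\<gamma>+2*p" using g p by simp
    have lp: "ln (real n) > 0" using ln2 by linarith
    have "real n powr (1/(1+2*\<gamma>+2*p)) > 0" using n0 by simp
    thus "0 < real n powr (1/(1+2*\<gamma>+2*p)) * ln (real n)" using lp by (rule mult_pos_pos)
  qed
  have "hfun p \<kappa> \<mu> n \<beta> \<le> (3*exp 8 * ((1+2*\<gamma>+2*p)/(real n powr (1/(1+2*\<gamma>+2*p)) * ln (real n))))
      * (T * (\<Sum>j. tm \<kappa> \<mu> n \<gamma> j))"
    unfolding hfun_tm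
  proof (rule mult_mono[OF pref[OF ln2 p g gb bg] Sle _ S0])
    have "(0::real) \<le> 3*exp 8" by simp
    thus "0 \<le> 3*exp 8 * ((1+2*\<gamma>+2*p)/(real n powr (1/(1+2*\<gamma>+2*p)) * ln (real n)))"
      using Pg0 by (rule mult_nonneg_nonneg)
  qed
  also have "\<dots> = (3*exp 8 * T) * hfun p \<kappa> \<mu> n \<gamma>" unfolding hfun_tm by (simp add: mult_ac)
  finally show ?thesis unfolding T_def .
qed

theorem lemma5p1:
  fixes p C l L :: real and \<kappa> :: "nat \<Rightarrow> real"
  assumes "p \<ge> 0" and "C > 0"
    and "\<And>i. i \<ge> 1 \<Longrightarrow> inverse C * real i powr (-p) \<le> \<kappa> i \<and> \<kappa> i \<le> C * real i powr (-p)"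
    and "0 < l" and "l < L"
  shows "\<exists>K>0. \<forall>\<mu> :: nat \<Rightarrow> real. summable (\<lambda>j. (\<mu> (Suc j))^2) \<longrightarrow>
     (\<forall>n::nat. \<forall>\<alpha>::real. real n \<ge> exp 4 \<and>
        ereal \<alpha> \<in> {alpha_up p \<kappa> \<mu> L n - ereal (1 / ln (real n)) .. alpha_up p \<kappa> \<mu> L n} \<longrightarrow>
        hfun p \<kappa> \<mu> n (real_of_ereal (alpha_up p \<kappa> \<mu> L n)) \<le> K * hfun p \<kappa> \<mu> n \<alpha>) \<and>
     (\<forall>n::nat. \<forall>\<alpha>::real. real n \<ge> exp 2 \<and>
        ereal \<alpha> \<in> {alpha_low p \<kappa> \<mu> l n .. alpha_low p \<kappa> \<mu> l n + ereal (1 / ln (real n))} \<longrightarrow>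
        hfun p \<kappa> \<mu> n \<alpha> \<le> K * hfun p \<kappa> \<mu> n (real_of_ereal (alpha_low p \<kappa> \<mu> l n)))"
proof -
  define K where "K = 3*exp 8 * exp(4+4*\<bar>ln C\<bar>)"
  have K0: "K > 0" unfolding K_def by simp
  have lnb: "ln (real n) \<ge> c" if "real n \<ge> exp c" for n :: nat and c :: real
  proof -
    have "real n > 0" using that by (smt (verit) exp_gt_zero)
    thus ?thesis using that ln_ge_iff by blast
  qed
  show ?thesis
  proof (intro exI[of _ K] conjI allI impI K0)
    fix \<mu> :: "nat \<Rightarrow> real" and n :: nat and \<alpha> :: real
    assume sm: "summable (\<lambda>j. (\<mu> (Suc j))^2)"
    {
      assume H: "real n \<ge> exp 4 \<and> ereal \<alpha> \<in> {alpha_up p \<kappa> \<mu> L n - ereal (1 / ln (real n)) .. alpha_up p \<kappa> \<mu> L n}"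
      have ln4: "ln (real n) \<ge> 4" using H lnb by blast
      define U where "U = alpha_up p \<kappa> \<mu> L n"
      have U0: "U \<ge> 0" unfolding U_def alpha_up_def by (rule Inf_greatest) auto
      show "hfun p \<kappa> \<mu> n (real_of_ereal U) \<le> K * hfun p \<kappa> \<mu> n \<alpha>"
      proof (cases U)
        case (real a)
        have a0: "a \<ge> 0" using U0 real by simp
        have ia: "a - 1/ln (real n) \<le> \<alpha>" "\<alpha> \<le> a" using H real unfolding U_def[symmetric] by auto
        have "1/ln (real n) \<le> 1/4" using ln4 by (simp add: divide_simps)
        hence g: "\<alpha> \<ge> -1/4" using ia a0 by linarith
        have bg: "a \<le> \<alpha> + 1/ln (real n)" using ia by simp
        have "hfun p \<kappa> \<mu> n a \<le> K * hfun p \<kappa> \<mu> n \<alpha>"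
          unfolding K_def using ln4 by (intro key[OF assms(1,2,3) sm _ g ia(2) bg]) auto
        thus ?thesis using real by simp
      next
        case PInf
        thus ?thesis using H unfolding U_def[symmetric] by simp
      next
        case MInf
        thus ?thesis using U0 by simp
      qed
    }
    {
      assume H: "real n \<ge> exp 2 \<and> ereal \<alpha> \<in> {alpha_low p \<kappa> \<mu> l n .. alpha_low p \<kappa> \<mu> l n + ereal (1 / ln (real n))}"
      have ln2: "ln (real n) \<ge> 2" using H lnb by blast
      define W where "W = alpha_low p \<kappa> \<mu> l n"
      have I0: "Inf {ereal \<alpha> | \<alpha>. \<alpha> > 0 \<and> hfun p \<kappa> \<mu> n \<alpha> > l} \<ge> 0" by (rule Inf_greatest) auto
      have W0: "W \<ge> 0" unfolding W_def alpha_low_def using I0 ln2 by simp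
      have Ws: "W \<le> ereal (sqrt (ln (real n)))" unfolding W_def alpha_low_def by simp
      show "hfun p \<kappa> \<mu> n \<alpha> \<le> K * hfun p \<kappa> \<mu> n (real_of_ereal W)"
      proof (cases W)
        case (real b)
        have b0: "b \<ge> 0" using W0 real by simp
        have ib: "b \<le> \<alpha>" "\<alpha> \<le> b + 1/ln (real n)" using H real unfolding W_def[symmetric] by auto
        have "hfun p \<kappa> \<mu> n \<alpha> \<le> K * hfun p \<kappa> \<mu> n b"
          unfolding K_def using ln2 b0 by (intro key[OF assms(1,2,3) sm ln2 _ ib]) auto
        thus ?thesis using real by simp
      next
        case PInf
        thus ?thesis using Ws by simp
      next
        case MInf
        thus ?thesis using W0 by simp
      qed
    }
  qed
qed

end
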